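(* The super-differential of $\theta$ at the origin is $\partial^+\theta(0)=\overline{\{\nabla\theta(q^{-1/2},q^{1/2}):q\in(0,\infty)\}}+[0,\infty)^2$.
   Context: $\theta:[0,\infty)^2\to[0,\infty)$ is continuous, concave, 1-homogeneous, symmetric, $C^\infty$ on $(0,\infty)^2$, with $\theta(0,s)=\theta(s,0)=0$, $\theta(s,s)=s$, $\theta(s,t)>0$ for $s,t>0$, and nondecreasing in each argument; it is regarded as a concave function $\mathbb{R}^2\to\mathbb{R}\cup\{-\infty\}$ with $\theta(s,t)=-\infty$ if $\min\{s,t\}<0$. The super-differential is $\partial^+\theta(x)=\{r\in\mathbb{R}^2:\theta(y)\le\theta(x)+\langle r,y-x\rangle\ \forall y\in\mathbb{R}^2\}$ (i.e. $-\partial(-\theta)(x)$). The overline denotes closure in $\mathbb{R}^2$ and $+$ the Minkowski sum. *)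

theory Defs
  imports "HOL-Analysis.Analysis" "HOL-Library.Extended_Real"
begin

definition quadrant :: "(real \<times> real) set" where
  "quadrant = {(s, t). 0 \<le> s \<and> 0 \<le> t}"

definition theta_ext :: "(real \<times> real \<Rightarrow> real) \<Rightarrow> real \<times> real \<Rightarrow> ereal" where
  "theta_ext \<theta> x = (if min (fst x) (snd x) < 0 then -\<infinity> else ereal (\<theta> x))"

definition superdiff :: "(real \<times> real \<Rightarrow> ereal) \<Rightarrow> real \<times> real \<Rightarrow> (real \<times> real) set" where
  "superdiff f x = {r. \<forall>y. f y \<le> f x + ereal (inner r (y - x))}"

inductive iter_partial :: "('a::euclidean_space \<Rightarrow> real) \<Rightarrow> ('a \<Rightarrow> real) \<Rightarrow> bool"
  for f where
  base: "iter_partial f f"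
| step: "iter_partial f g \<Longrightarrow> b \<in> Basis \<Longrightarrow>
           iter_partial f (\<lambda>x. frechet_derivative g (at x) b)"

definition smooth_on :: "('a::euclidean_space \<Rightarrow> real) \<Rightarrow> 'a set \<Rightarrow> bool" where
  "smooth_on f S \<longleftrightarrow> open S \<and> (\<forall>g. iter_partial f g \<longrightarrow> g differentiable_on S)"

definition grad :: "(real \<times> real \<Rightarrow> real) \<Rightarrow> real \<times> real \<Rightarrow> real \<times> real" where
  "grad f x = (frechet_derivative f (at x) (1, 0), frechet_derivative f (at x) (0, 1))"

end

theory Submission
  imports Defs
begin

lemma supergrad:
  fixes \<theta> :: "real \<times> real \<Rightarrow> real"
  assumes conc: "concave_on quadrant \<theta>"
    and xq: "x \<in> quadrant" and yq: "y \<in> quadrant"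
    and D: "(\<theta> has_derivative D) (at x)"
  shows "\<theta> y \<le> \<theta> x + D (y - x)"
proof -
  define v where "v = y - x"
  have "((\<lambda>t. \<theta> (x + t *\<^sub>R v)) has_derivative (\<lambda>t. D (t *\<^sub>R v))) (at 0)"
  proof -
    have "((\<lambda>t::real. x + t *\<^sub>R v) has_derivative (\<lambda>t. t *\<^sub>R v)) (at 0)"
      by (auto intro!: derivative_eq_intros)
    from diff_chain_at[OF this] D show ?thesis by (simp add: o_def)
  qed
  moreover have "linear D" using D has_derivative_linear by blast
  then have "(\<lambda>t. D (t *\<^sub>R v)) = (*) (D v)"
    by (intro ext) (simp add: linear_scale)
  ultimately have "((\<lambda>t. \<theta> (x + t *\<^sub>R v)) has_field_derivative D v) (at 0)"
    by (simp add: has_field_derivative_def)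
  then have "((\<lambda>t. \<theta> (x + t *\<^sub>R v)) has_field_derivative D v) (at 0 within {0<..})"
    by (rule has_field_derivative_at_within)
  then have lim: "((\<lambda>t. (\<theta> (x + t *\<^sub>R v) - \<theta> (x + 0 *\<^sub>R v)) / (t - 0)) \<longlongrightarrow> D v) (at_right 0)"
    by (simp add: has_field_derivative_iff)
  have ev: "eventually (\<lambda>t. \<theta> y - \<theta> x \<le> (\<theta> (x + t *\<^sub>R v) - \<theta> (x + 0 *\<^sub>R v)) / (t - 0)) (at_right 0)"
  proof -
    have "eventually (\<lambda>t::real. t \<in> {0<..<1}) (at_right 0)"
      by (rule eventually_at_right_real) simp
    then show ?thesis
    proof eventually_elim
      case (elim t)
      then have t: "0 < t" "t \<le> 1" by auto
      have "\<theta> ((1 - t) *\<^sub>R x + t *\<^sub>R y) \<ge> (1 - t) * \<theta> x + t * \<theta> y"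
        using concave_onD[OF conc, of t x y] t xq yq by auto
      moreover have "(1 - t) *\<^sub>R x + t *\<^sub>R y = x + t *\<^sub>R v"
        by (simp add: v_def algebra_simps)
      ultimately have "t * (\<theta> y - \<theta> x) \<le> \<theta> (x + t *\<^sub>R v) - \<theta> x"
        by (simp add: algebra_simps)
      then show ?case using t by (simp add: pos_le_divide_eq mult.commute)
    qed
  qed
  have "\<theta> y - \<theta> x \<le> D v"
    by (rule tendsto_lowerbound[OF lim ev]) simp
  then show ?thesis by (simp add: v_def)
qed

lemma inner_pair_real: "inner (x::real\<times>real) (a, b) = fst x * a + snd x * b"
  by (cases x) simp

lemma linear_pair_eq:
  assumes "linear (D :: real \<times> real \<Rightarrow> real)"
  shows "D y = inner (D (1,0), D (0,1)) y"
proof -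
  obtain a b where y: "y = (a, b)" by (cases y)
  have "y = a *\<^sub>R (1,0) + b *\<^sub>R (0,1)" by (simp add: y)
  then have "D y = D (a *\<^sub>R (1,0)) + D (b *\<^sub>R (0,1))"
    using linear_add[OF assms] by metis
  then have "D y = a * D (1,0) + b * D (0,1)"
    using linear_scale[OF assms, of a "(1,0)"] linear_scale[OF assms, of b "(0,1)"] by simp
  then show ?thesis by (simp add: y)
qed

lemma gradprops:
  fixes \<theta> :: "real \<times> real \<Rightarrow> real"
  assumes conc: "concave_on quadrant \<theta>"
    and hom: "\<And>c x. 0 \<le> c \<Longrightarrow> x \<in> quadrant \<Longrightarrow> \<theta> (c *\<^sub>R x) = c * \<theta> x"
    and smooth: "smooth_on \<theta> {(s, t). 0 < s \<and> 0 < t}"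
    and x: "0 < fst x" "0 < snd x"
  shows "\<forall>y\<in>quadrant. \<theta> y \<le> inner (grad \<theta> x) y" and "inner (grad \<theta> x) x = \<theta> x"
proof -
  let ?P = "{(s, t). 0 < s \<and> 0 < t} :: (real \<times> real) set"
  have xP: "x \<in> ?P" using x by (cases x) auto
  have dP: "\<theta> differentiable_on ?P"
    using smooth iter_partial.base[of \<theta>] unfolding smooth_on_def by (elim conjE allE impE)
  have oP: "open ?P"
    using smooth unfolding smooth_on_def by (elim conjE)
  have "\<theta> differentiable (at x)"
    using bspec[OF iffD1[OF differentiable_on_eq_differentiable_at[OF oP] dP] xP] .
  then have D: "(\<theta> has_derivative frechet_derivative \<theta> (at x)) (at x)"
    by (rule iffD1[OF frechet_derivative_works])
  define D where "D = frechet_derivative \<theta> (at x)"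
  have lin: "linear D" using D has_derivative_linear unfolding D_def by blast
  have Dg: "\<And>y. D y = inner (grad \<theta> x) y"
  proof -
    fix y
    have "grad \<theta> x = (D (1,0), D (0,1))" unfolding grad_def D_def by (rule refl)
    then show "D y = inner (grad \<theta> x) y" using linear_pair_eq[OF lin, of y] by metis
  qed
  have xq: "x \<in> quadrant" using x by (cases x) (auto simp: quadrant_def)
  have sg: "\<And>y. y \<in> quadrant \<Longrightarrow> \<theta> y \<le> \<theta> x + D (y - x)"
    unfolding D_def by (rule supergrad[OF conc xq _ D])
  have q2: "(2::real) *\<^sub>R x \<in> quadrant" "(0::real\<times>real) \<in> quadrant"
    using x by (cases x, simp add: quadrant_def) (simp add: quadrant_def zero_prod_def)
  have "\<theta> (2 *\<^sub>R x) \<le> \<theta> x + D (2 *\<^sub>R x - x)" using sg[OF q2(1)] .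
  moreover have "\<theta> (2 *\<^sub>R x) = 2 * \<theta> x" using hom[OF _ xq, of 2] by simp
  moreover have "D (2 *\<^sub>R x - x) = D x"
  proof -
    have "2 *\<^sub>R x - x = x" by (metis add_diff_cancel scaleR_2)
    then show ?thesis by metis
  qed
  ultimately have a1: "\<theta> x \<le> D x" by simp
  have "\<theta> 0 \<le> \<theta> x + D (0 - x)" using sg[OF q2(2)] .
  moreover have "\<theta> 0 = 0" using hom[OF _ xq, of 0] by simp
  moreover have "D (0 - x) = - D x" using linear_neg[OF lin, of x] by simp
  ultimately have a2: "D x \<le> \<theta> x" by simp
  have eq: "D x = \<theta> x" using a1 a2 by simp
  show "inner (grad \<theta> x) x = \<theta> x" using eq Dg by simp
  show "\<forall>y\<in>quadrant. \<theta> y \<le> inner (grad \<theta> x) y"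
  proof
    fix y assume "y \<in> quadrant"
    then have "\<theta> y \<le> \<theta> x + D (y - x)" by (rule sg)
    also have "\<dots> = D y" using eq lin by (simp add: linear_diff)
    finally show "\<theta> y \<le> inner (grad \<theta> x) y" using Dg by simp
  qed
qed

lemma lim_closure:
  fixes X :: "nat \<Rightarrow> real \<times> real"
  assumes XG: "\<And>n. X n \<in> G"
    and bnd: "\<And>n. 0 \<le> fst (X n) \<and> fst (X n) \<le> M \<and> 0 \<le> snd (X n) \<and> snd (X n) \<le> M"
    and a: "\<And>n. fst (X n) \<le> a n" "a \<longlonglongrightarrow> A"
    and b: "\<And>n. snd (X n) \<le> b n" "b \<longlonglongrightarrow> B"
  shows "\<exists>l\<in>closure G. fst l \<le> A \<and> snd l \<le> B"
proof -
  have "range X \<subseteq> cbox (0,0) (M,M)"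
  proof
    fix z assume "z \<in> range X"
    then obtain n where "z = X n" by blast
    then show "z \<in> cbox (0,0) (M,M)" using bnd[of n] by (cases "X n") (simp add: cbox_Pair_eq)
  qed
  then have "bounded (range X)" using bounded_cbox bounded_subset by blast
  then obtain l r where r: "strict_mono (r::nat\<Rightarrow>nat)" and l: "(X \<circ> r) \<longlonglongrightarrow> l"
    using bounded_imp_convergent_subsequence by blast
  have "l \<in> closure G"
    unfolding closure_sequential using XG l by (intro exI[of _ "X \<circ> r"]) auto
  moreover have "fst l \<le> A"
  proof (rule LIMSEQ_le)
    show "(\<lambda>n. fst ((X \<circ> r) n)) \<longlonglongrightarrow> fst l" using l by (rule tendsto_fst)
    show "(a \<circ> r) \<longlonglongrightarrow> A" using LIMSEQ_subseq_LIMSEQ[OF a(2) r] .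
    show "\<exists>N. \<forall>n\<ge>N. fst ((X \<circ> r) n) \<le> (a \<circ> r) n" using a(1) by auto
  qed
  moreover have "snd l \<le> B"
  proof (rule LIMSEQ_le)
    show "(\<lambda>n. snd ((X \<circ> r) n)) \<longlonglongrightarrow> snd l" using l by (rule tendsto_snd)
    show "(b \<circ> r) \<longlonglongrightarrow> B" using LIMSEQ_subseq_LIMSEQ[OF b(2) r] .
    show "\<exists>N. \<forall>n\<ge>N. snd ((X \<circ> r) n) \<le> (b \<circ> r) n" using b(1) by auto
  qed
  ultimately show ?thesis by blast
qed

theorem lemma4p6:
  fixes \<theta> :: "real \<times> real \<Rightarrow> real"
  assumes cont: "continuous_on quadrant \<theta>"
    and conc: "concave_on quadrant \<theta>"
    and hom: "\<And>c x. 0 \<le> c \<Longrightarrow> x \<in> quadrant \<Longrightarrow> \<theta> (c *\<^sub>R x) = c * \<theta> x"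
    and sym: "\<And>s t. 0 \<le> s \<Longrightarrow> 0 \<le> t \<Longrightarrow> \<theta> (s, t) = \<theta> (t, s)"
    and smooth: "smooth_on \<theta> {(s, t). 0 < s \<and> 0 < t}"
    and zero1: "\<And>s. 0 \<le> s \<Longrightarrow> \<theta> (0, s) = 0"
    and zero2: "\<And>s. 0 \<le> s \<Longrightarrow> \<theta> (s, 0) = 0"
    and diag: "\<And>s. 0 \<le> s \<Longrightarrow> \<theta> (s, s) = s"
    and pos: "\<And>s t. 0 < s \<Longrightarrow> 0 < t \<Longrightarrow> \<theta> (s, t) > 0"
    and mono1: "\<And>s s' t. 0 \<le> s \<Longrightarrow> s \<le> s' \<Longrightarrow> 0 \<le> t \<Longrightarrow> \<theta> (s, t) \<le> \<theta> (s', t)"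
    and mono2: "\<And>s t t'. 0 \<le> s \<Longrightarrow> 0 \<le> t \<Longrightarrow> t \<le> t' \<Longrightarrow> \<theta> (s, t) \<le> \<theta> (s, t')"
  shows "superdiff (theta_ext \<theta>) 0 =
    {a + b | a b. a \<in> closure {grad \<theta> (1 / sqrt q, sqrt q) | q. 0 < q} \<and> b \<in> quadrant}"
proof -
  let ?P = "{(s, t). 0 < s \<and> 0 < t} :: (real \<times> real) set"
  define S where "S = {r. \<forall>y\<in>quadrant. \<theta> y \<le> inner r y}"
  define g where "g q = grad \<theta> (1 / sqrt q, sqrt q)" for q
  have Geq: "{grad \<theta> (1 / sqrt q, sqrt q) | q. 0 < q} = {g q | q. 0 < q}"
    by (simp add: g_def)
  have quad_iff: "\<And>a b. (a, b) \<in> quadrant \<longleftrightarrow> 0 \<le> a \<and> 0 \<le> b"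
    by (simp add: quadrant_def)
  have th0: "\<theta> 0 = 0" using zero1[of 0] by (simp add: zero_prod_def)
  have SD: "superdiff (theta_ext \<theta>) 0 = S"
  proof (intro set_eqI iffI)
    fix r assume r: "r \<in> superdiff (theta_ext \<theta>) 0"
    show "r \<in> S" unfolding S_def
    proof (intro CollectI ballI)
      fix y assume y: "y \<in> quadrant"
      then have "\<not> min (fst y) (snd y) < 0" by (cases y) (simp add: quad_iff min_less_iff_disj)
      moreover have "theta_ext \<theta> y \<le> theta_ext \<theta> 0 + ereal (inner r (y - 0))"
        using r unfolding superdiff_def by blast
      ultimately show "\<theta> y \<le> inner r y"
        by (simp add: theta_ext_def th0)
    qed
  next
    fix r assume r: "r \<in> S"
    show "r \<in> superdiff (theta_ext \<theta>) 0" unfolding superdiff_def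
    proof (intro CollectI allI)
      fix y
      show "theta_ext \<theta> y \<le> theta_ext \<theta> 0 + ereal (inner r (y - 0))"
      proof (cases "min (fst y) (snd y) < 0")
        case True then show ?thesis by (simp add: theta_ext_def)
      next
        case False
        then have "y \<in> quadrant" by (cases y) (simp add: quad_iff min_less_iff_disj)
        then have "\<theta> y \<le> inner r y" using r unfolding S_def by blast
        then show ?thesis using False by (simp add: theta_ext_def th0)
      qed
    qed
  qed
  have gp: "\<And>q. 0 < q \<Longrightarrow> (\<forall>y\<in>quadrant. \<theta> y \<le> inner (g q) y) \<and>
      inner (g q) (1 / sqrt q, sqrt q) = \<theta> (1 / sqrt q, sqrt q)"
  proof -
    fix q :: real assume q: "0 < q"
    show "(\<forall>y\<in>quadrant. \<theta> y \<le> inner (g q) y) \<and>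
      inner (g q) (1 / sqrt q, sqrt q) = \<theta> (1 / sqrt q, sqrt q)"
      using gradprops[OF conc hom smooth, of "(1 / sqrt q, sqrt q)"] q by (simp add: g_def)
  qed
  have gS: "\<And>q. 0 < q \<Longrightarrow> g q \<in> S" using gp unfolding S_def by blast
  have F2: "\<And>q. 0 < q \<Longrightarrow> fst (g q) + snd (g q) * q = \<theta> (1, q)"
  proof -
    fix q :: real assume q: "0 < q"
    define p where "p = (1 / sqrt q, sqrt q)"
    have pq: "p \<in> quadrant" using q by (simp add: p_def quad_iff)
    have e: "(1, q) = sqrt q *\<^sub>R p" using q by (simp add: p_def)
    have "fst (g q) + snd (g q) * q = inner (g q) (1, q)" by (simp add: inner_pair_real)
    also have "\<dots> = sqrt q * inner (g q) p" by (simp add: e)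
    also have "\<dots> = sqrt q * \<theta> p" using gp[OF q] by (simp add: p_def)
    also have "\<dots> = \<theta> (1, q)" using hom[OF _ pq, of "sqrt q"] q e by simp
    finally show "fst (g q) + snd (g q) * q = \<theta> (1, q)" .
  qed
  have gnn: "\<And>q. 0 < q \<Longrightarrow> 0 \<le> fst (g q) \<and> 0 \<le> snd (g q)"
  proof -
    fix q :: real assume q: "0 < q"
    have "\<theta> (1, 0) \<le> inner (g q) (1, 0)" "\<theta> (0, 1) \<le> inner (g q) (0, 1)"
      using gp[OF q] by (simp_all add: quad_iff)
    then show "0 \<le> fst (g q) \<and> 0 \<le> snd (g q)"
      using zero1[of 1] zero2[of 1] by (simp add: inner_pair_real)
  qed
  have closedS: "closed S"
  proof -
    have "S = (\<Inter>y\<in>quadrant. {r. inner y r \<ge> \<theta> y})"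
      by (rule set_eqI) (simp only: S_def INT_iff mem_Collect_eq inner_commute)
    then show ?thesis by (simp add: closed_INT closed_halfspace_ge)
  qed
  have hcont: "continuous_on {0<..} (\<lambda>q. snd (g q))"
  proof -
    have "(0::real, 1::real) \<in> (Basis :: (real \<times> real) set)" by (simp add: Basis_prod_def)
    then have ip: "iter_partial \<theta> (\<lambda>x. frechet_derivative \<theta> (at x) (0, 1))"
      by (rule iter_partial.step[OF iter_partial.base])
    then have "(\<lambda>x. frechet_derivative \<theta> (at x) (0, 1)) differentiable_on ?P"
      using smooth unfolding smooth_on_def by (elim conjE allE impE)
    then have c1: "continuous_on ?P (\<lambda>x. frechet_derivative \<theta> (at x) (0, 1))"
      by (rule differentiable_imp_continuous_on)
    have c2: "continuous_on {0<..} (\<lambda>q::real. (1 / sqrt q, sqrt q))"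
      by (intro continuous_intros) auto
    have c3: "(\<lambda>q::real. (1 / sqrt q, sqrt q)) ` {0<..} \<subseteq> ?P" by auto
    have "continuous_on {0<..} (\<lambda>q. frechet_derivative \<theta> (at (1 / sqrt q, sqrt q)) (0, 1))"
      by (rule continuous_on_compose2[OF c1 c2 c3])
    then show ?thesis by (simp add: g_def grad_def)
  qed
  have clS: "closure {g q | q. 0 < q} \<subseteq> S"
    using closedS gS by (intro closure_minimal) auto
  have "S = {a + b | a b. a \<in> closure {g q | q. 0 < q} \<and> b \<in> quadrant}"
  proof (intro set_eqI iffI)
    fix x assume "x \<in> {a + b | a b. a \<in> closure {g q | q. 0 < q} \<and> b \<in> quadrant}"
    then obtain a b where x: "x = a + b" and a: "a \<in> S" and b: "b \<in> quadrant"
      using clS by blast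
    show "x \<in> S" unfolding S_def
    proof (intro CollectI ballI)
      fix y assume y: "y \<in> quadrant"
      have "0 \<le> inner b y" using b y
        by (cases b, cases y) (simp add: quad_iff)
      moreover have "\<theta> y \<le> inner a y" using a y unfolding S_def by blast
      ultimately show "\<theta> y \<le> inner x y" by (simp add: x inner_add_left)
    qed
  next
    fix r assume r: "r \<in> S"
    obtain r1 r2 where rr: "r = (r1, r2)" by (cases r)
    have rS: "\<And>y. y \<in> quadrant \<Longrightarrow> \<theta> y \<le> inner r y" using r unfolding S_def by blast
    have r1: "0 \<le> r1" using rS[of "(1,0)"] zero2[of 1] by (simp add: quad_iff rr)
    have r2: "0 \<le> r2" using rS[of "(0,1)"] zero1[of 1] by (simp add: quad_iff rr)
    have bnd: "\<And>q. 0 < q \<Longrightarrow> \<theta> (1, q) \<le> r1 + r2 * q"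
    proof -
      fix q :: real assume "0 < q"
      then have "(1, q) \<in> quadrant" by (simp add: quad_iff)
      from rS[OF this] show "\<theta> (1, q) \<le> r1 + r2 * q" by (simp add: rr)
    qed
    have GinC: "\<And>q. 0 < q \<Longrightarrow> g q \<in> closure {g q | q. 0 < q}"
    proof -
      fix q :: real assume "0 < q"
      then have "g q \<in> {g q | q. 0 < q}" by blast
      then show "g q \<in> closure {g q | q. 0 < q}" by (rule subsetD[OF closure_subset])
    qed
    have "\<exists>l\<in>closure {g q | q. 0 < q}. fst l \<le> r1 \<and> snd l \<le> r2"
    proof (cases "\<exists>q>0. snd (g q) = r2")
      case True
      then obtain q where q: "0 < q" "snd (g q) = r2" by blast
      have "fst (g q) \<le> r1" using F2[OF q(1)] bnd[OF q(1)] q(2) by simp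
      then show ?thesis using GinC[OF q(1)] q(2) by auto
    next
      case notA: False
      show ?thesis
      proof (cases "\<forall>q>0. snd (g q) < r2")
        case B: True
        define qn where "qn n = inverse (real (Suc n))" for n
        have qn: "\<And>n. 0 < qn n \<and> qn n \<le> 1" by (simp add: qn_def inverse_le_1_iff)
        show ?thesis
        proof (rule lim_closure[where X = "\<lambda>n. g (qn n)" and M = "r1 + r2"
              and a = "\<lambda>n. r1 + r2 * qn n" and b = "\<lambda>n. r2"])
          fix n
          have q0: "0 < qn n" using qn by blast
          show "g (qn n) \<in> {g q | q. 0 < q}" using q0 by blast
          have e: "fst (g (qn n)) + snd (g (qn n)) * qn n \<le> r1 + r2 * qn n"
            using F2[OF q0] bnd[OF q0] by simp
          have nn: "0 \<le> fst (g (qn n))" "0 \<le> snd (g (qn n))" using gnn[OF q0] by auto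
          have "0 \<le> snd (g (qn n)) * qn n" using nn q0 by simp
          then show f1: "fst (g (qn n)) \<le> r1 + r2 * qn n" using e by linarith
          have "r2 * qn n \<le> r2" using r2 qn[of n] by (simp add: mult_left_le)
          then show "0 \<le> fst (g (qn n)) \<and> fst (g (qn n)) \<le> r1 + r2 \<and>
              0 \<le> snd (g (qn n)) \<and> snd (g (qn n)) \<le> r1 + r2"
            using nn f1 B q0 r1 by force
          show "snd (g (qn n)) \<le> r2" using B q0 by force
        next
          have "(\<lambda>n. r1 + r2 * qn n) \<longlonglongrightarrow> r1 + r2 * 0"
            unfolding qn_def by (intro tendsto_intros LIMSEQ_inverse_real_of_nat)
          then show "(\<lambda>n. r1 + r2 * qn n) \<longlonglongrightarrow> r1" by simp
        qed simp
      next
        case notB: False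
        show ?thesis
        proof (cases "\<forall>q>0. r2 < snd (g q)")
          case C: True
          have inf: "\<exists>q>0. snd (g q) < r2 + e" if e: "0 < e" for e
          proof (rule ccontr)
            assume "\<not> (\<exists>q>0. snd (g q) < r2 + e)"
            then have ge: "\<And>q. 0 < q \<Longrightarrow> r2 + e \<le> snd (g q)" by force
            define u where "u = (r1 + r2 + 1) / e + 1"
            have u1: "1 \<le> u" using r1 r2 e by (simp add: u_def)
            then have u0: "0 < u" by simp
            have eu: "e * (u - 1) = r1 + r2 + 1" using e by (simp add: u_def)
            have "\<theta> (1, 1) \<le> inner (g u) (1, 1)" using gp[OF u0] by (simp add: quad_iff)
            then have s1: "1 \<le> fst (g u) + snd (g u)" using diag[of 1] by (simp add: inner_pair_real)
            have s2: "fst (g u) + snd (g u) * u \<le> r1 + r2 * u" using F2[OF u0] bnd[OF u0] by simp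
            have s3: "(r2 + e) * (u - 1) \<le> snd (g u) * (u - 1)"
              using ge[OF u0] u1 by (intro mult_right_mono) auto
            have "1 + snd (g u) * (u - 1) \<le> r1 + r2 * u"
              using s1 s2 by (simp add: algebra_simps)
            then have "1 + (r2 + e) * (u - 1) \<le> r1 + r2 * u" using s3 by linarith
            then have "1 + r2 * (u - 1) + e * (u - 1) \<le> r1 + r2 * u"
              by (simp add: algebra_simps)
            then show False using eu by (simp add: algebra_simps)
          qed
          have "\<forall>n. \<exists>q>0. snd (g q) < r2 + inverse (real (Suc n))"
            using inf by simp
          then obtain qs where qs: "\<And>n. 0 < qs n \<and> snd (g (qs n)) < r2 + inverse (real (Suc n))"
            by metis
          show ?thesis
          proof (rule lim_closure[where X = "\<lambda>n. g (qs n)" and M = "r1 + r2 + 1"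
                and a = "\<lambda>n. r1" and b = "\<lambda>n. r2 + inverse (real (Suc n))"])
            fix n
            have q0: "0 < qs n" using qs by blast
            show "g (qs n) \<in> {g q | q. 0 < q}" using q0 by blast
            have e: "fst (g (qs n)) + snd (g (qs n)) * qs n \<le> r1 + r2 * qs n"
              using F2[OF q0] bnd[OF q0] by simp
            have "r2 * qs n \<le> snd (g (qs n)) * qs n"
              using C q0 by (intro mult_right_mono) (auto intro: less_imp_le)
            then show f1: "fst (g (qs n)) \<le> r1" using e by linarith
            have nn: "0 \<le> fst (g (qs n))" "0 \<le> snd (g (qs n))" using gnn[OF q0] by auto
            have "inverse (real (Suc n)) \<le> 1" by (simp add: inverse_le_1_iff)
            then show "0 \<le> fst (g (qs n)) \<and> fst (g (qs n)) \<le> r1 + r2 + 1 \<and>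
              0 \<le> snd (g (qs n)) \<and> snd (g (qs n)) \<le> r1 + r2 + 1"
              using nn f1 qs[of n] r1 r2 by linarith
            show "snd (g (qs n)) \<le> r2 + inverse (real (Suc n))" using qs[of n] by linarith
          next
            have "(\<lambda>n. r2 + inverse (real (Suc n))) \<longlonglongrightarrow> r2 + 0"
              by (intro tendsto_intros LIMSEQ_inverse_real_of_nat)
            then show "(\<lambda>n. r2 + inverse (real (Suc n))) \<longlonglongrightarrow> r2" by simp
          qed simp
        next
          case notC: False
          obtain q1 where q1: "0 < q1" "r2 < snd (g q1)"
            using notA notB by (metis linorder_neqE_linordered_idom)
          obtain q2 where q2: "0 < q2" "snd (g q2) < r2"
            using notA notC by (metis linorder_neqE_linordered_idom)
          have cI: "\<And>a b. 0 < a \<Longrightarrow> continuous_on {a..b} (\<lambda>q. snd (g q))"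
            using hcont by (rule continuous_on_subset) auto
          have "\<exists>q. min q1 q2 \<le> q \<and> q \<le> max q1 q2 \<and> snd (g q) = r2"
          proof (cases "q1 \<le> q2")
            case True
            then show ?thesis using IVT2'[of "\<lambda>q. snd (g q)" q2 r2 q1] cI[OF q1(1), of q2] q1 q2
              by force
          next
            case False
            then show ?thesis using IVT'[of "\<lambda>q. snd (g q)" q2 r2 q1] cI[OF q2(1), of q1] q1 q2
              by force
          qed
          then obtain q where "min q1 q2 \<le> q" "snd (g q) = r2" by blast
          moreover have "0 < min q1 q2" using q1 q2 by simp
          ultimately have "0 < q \<and> snd (g q) = r2" by linarith
          then show ?thesis using notA by blast
        qed
      qed
    qed
    then obtain l where l: "l \<in> closure {g q | q. 0 < q}" "fst l \<le> r1" "snd l \<le> r2" by blast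
    have "r = l + (r - l)" by simp
    moreover have "r - l \<in> quadrant" using l rr by (cases l) (simp add: quad_iff)
    ultimately show "r \<in> {a + b | a b. a \<in> closure {g q | q. 0 < q} \<and> b \<in> quadrant}"
      using l(1) by blast
  qed
  then show ?thesis using SD Geq by simp
qed

end
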